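(* Consider the linear family $F_\theta=\theta^\top\psi$, $\theta\in\Theta\subset\mathbb R^d$, and assume (A2) and (A4). Let $\Gamma_0(\theta)=\Lambda_0(F_\theta)-\pi^1(F_\theta)$ and $\Gamma(\theta)=\Gamma_0(\theta)+\tfrac12(v^\top\theta)^2$. Let $\theta^\circ$ be a minimizer of $\Gamma$, let $r^\circ=\varrho_a-\Lambda_0(F_{\theta^\circ})$ and $\theta^*=\theta^\circ+r^\circ v$, and suppose $\theta^*\in\Theta$. Then $\theta^*$ is a global minimizer over $\Theta$ of $\theta\mapsto\bar J^*_\infty(\kappa;\theta)$, for every $\kappa>1$.
   Context: Setting: $(\mathsf Y,\mathcal B)$ measurable space; $X^0,X^1$ mutually independent stationary $\mathsf Y$-valued processes with marginals $\pi^0,\pi^1$, independent of a change time $\tau_a$; $\nu(G)=\int G\,d\nu$. $\Lambda_0(G)=\lim_n\frac1n\log E[\exp(\sum_{k=0}^{n-1}G(X^0_k))]$. $\psi=(\psi^1,\dots,\psi^d):\mathsf Y\to\mathbb R^d$ is a fixed measurable function. (A2): for some $\varrho_a\in(0,\infty)$, $\lim_n\frac1n\log P\{\tau_a\ge n\}=-\varrho_a$. (A3) for a function $F$: with $\Upsilon_0(\vartheta)=\Lambda_0(\vartheta F)$, $F$ belongs to the class $\mathcal G$ (functions for which the cumulant generating functions for $X^0,X^1$ exist finitely and the twisted marginals, twisted processes and relative entropy rates exist); there exist $\vartheta_+>\vartheta_0>0$ with $\Upsilon_0(\vartheta_0)=0$, $\Upsilon_0(\vartheta_+)=\varrho_a$;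 $\Upsilon_0$ is finite and $C^1$ near $[0,\vartheta_+]$; $\vartheta F\in\mathcal G$ for $\vartheta$ near $[0,\vartheta_+]$. (A4) for the family $\{F_\theta\}$: $\Theta$ is open and $F_\theta$ satisfies (A3) for each $\theta$; (i) $\psi_\theta=\nabla_\theta F_\theta$ (here $=\psi$) has components in $\mathcal G$; (ii) $(\vartheta,\theta)\mapsto\Lambda_0(\vartheta F_\theta)$ is $C^1$ on a neighborhood of $\{(\vartheta,\theta):\vartheta\in[0,\vartheta_+^\theta],\theta\in\Theta\}$; (iii) there is $v\in\mathbb R^d$ with $v^\top\psi\equiv1$. Notation: $\vartheta_+^\theta>\vartheta_0^\theta>0$ solve $\Lambda_0(\vartheta_0^\theta F_\theta)=0$, $\Lambda_0(\vartheta_+^\theta F_\theta)=\varrho_a$; $m_1^\theta=\pi^1(F_\theta)$ (assumed positive); $\bar J^*_\infty(\kappa;\theta)=\frac{1}{m_1^\theta\vartheta_+^\theta}\log\kappa$. *)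

theory Defs
  imports "HOL-Probability.Probability"
begin

definition cgf_seq :: "'w measure \<Rightarrow> (nat \<Rightarrow> 'w \<Rightarrow> 'y) \<Rightarrow> ('y \<Rightarrow> real) \<Rightarrow> nat \<Rightarrow> real" where
  "cgf_seq M X G = (\<lambda>n. ln (integral\<^sup>L M (\<lambda>\<omega>. exp (\<Sum>k<n. G (X k \<omega>)))) / real n)"

definition cgf_exists :: "'w measure \<Rightarrow> (nat \<Rightarrow> 'w \<Rightarrow> 'y) \<Rightarrow> ('y \<Rightarrow> real) \<Rightarrow> bool" where
  "cgf_exists M X G \<longleftrightarrow>
     (\<forall>n. integrable M (\<lambda>\<omega>. exp (\<Sum>k<n. G (X k \<omega>)))) \<and> convergent (cgf_seq M X G)"

definition cgf :: "'w measure \<Rightarrow> (nat \<Rightarrow> 'w \<Rightarrow> 'y) \<Rightarrow> ('y \<Rightarrow> real) \<Rightarrow> real" where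
  "cgf M X G = lim (cgf_seq M X G)"

definition marginal :: "'w measure \<Rightarrow> 'y measure \<Rightarrow> (nat \<Rightarrow> 'w \<Rightarrow> 'y) \<Rightarrow> 'y measure" where
  "marginal M Y X = distr M Y (X 0)"

definition stationary :: "'w measure \<Rightarrow> 'y measure \<Rightarrow> (nat \<Rightarrow> 'w \<Rightarrow> 'y) \<Rightarrow> bool" where
  "stationary M Y X \<longleftrightarrow>
     (\<forall>k m. distr M (PiM {..<m} (\<lambda>_. Y)) (\<lambda>\<omega>. \<lambda>i\<in>{..<m}. X (i + k) \<omega>)
          = distr M (PiM {..<m} (\<lambda>_. Y)) (\<lambda>\<omega>. \<lambda>i\<in>{..<m}. X i \<omega>))"

definition in_classG :: "'w measure \<Rightarrow> 'y measure \<Rightarrow> (nat \<Rightarrow> 'w \<Rightarrow> 'y) \<Rightarrow> (nat \<Rightarrow> 'w \<Rightarrow> 'y)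
    \<Rightarrow> ('y \<Rightarrow> real) \<Rightarrow> bool" where
  "in_classG M Y X0 X1 G \<longleftrightarrow> G \<in> borel_measurable Y \<and> cgf_exists M X0 G \<and> cgf_exists M X1 G
     \<and> integrable (marginal M Y X0) G \<and> integrable (marginal M Y X1) G"

definition C1_on :: "'a::real_normed_vector set \<Rightarrow> ('a \<Rightarrow> 'b::real_normed_vector) \<Rightarrow> bool" where
  "C1_on U f \<longleftrightarrow> (\<exists>f'. continuous_on U f' \<and> (\<forall>p\<in>U. (f has_derivative blinfun_apply (f' p)) (at p)))"

definition A3 :: "'w measure \<Rightarrow> 'y measure \<Rightarrow> (nat \<Rightarrow> 'w \<Rightarrow> 'y) \<Rightarrow> (nat \<Rightarrow> 'w \<Rightarrow> 'y)
    \<Rightarrow> real \<Rightarrow> ('y \<Rightarrow> real) \<Rightarrow> bool" where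
  "A3 M Y X0 X1 \<rho> F \<longleftrightarrow> in_classG M Y X0 X1 F \<and>
     (\<exists>t0 tp. 0 < t0 \<and> t0 < tp \<and>
        cgf_exists M X0 (\<lambda>y. t0 * F y) \<and> cgf M X0 (\<lambda>y. t0 * F y) = 0 \<and>
        cgf_exists M X0 (\<lambda>y. tp * F y) \<and> cgf M X0 (\<lambda>y. tp * F y) = \<rho> \<and>
        (\<exists>U. open U \<and> {0..tp} \<subseteq> U \<and>
             (\<forall>t\<in>U. in_classG M Y X0 X1 (\<lambda>y. t * F y)) \<and>
             C1_on U (\<lambda>t. cgf M X0 (\<lambda>y. t * F y))))"

definition theta_plus :: "'w measure \<Rightarrow> (nat \<Rightarrow> 'w \<Rightarrow> 'y) \<Rightarrow> real \<Rightarrow> ('y \<Rightarrow> real) \<Rightarrow> real" where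
  "theta_plus M X0 \<rho> F = (THE tp. 0 < tp \<and>
      (\<exists>t0. 0 < t0 \<and> t0 < tp \<and> cgf_exists M X0 (\<lambda>y. t0 * F y) \<and> cgf M X0 (\<lambda>y. t0 * F y) = 0) \<and>
      cgf_exists M X0 (\<lambda>y. tp * F y) \<and> cgf M X0 (\<lambda>y. tp * F y) = \<rho>)"

definition Flin :: "('y \<Rightarrow> real ^ 'd) \<Rightarrow> real ^ 'd \<Rightarrow> 'y \<Rightarrow> real" where
  "Flin \<psi> \<theta> = (\<lambda>y. \<theta> \<bullet> \<psi> y)"

definition m1 :: "'w measure \<Rightarrow> 'y measure \<Rightarrow> (nat \<Rightarrow> 'w \<Rightarrow> 'y) \<Rightarrow> ('y \<Rightarrow> real) \<Rightarrow> real" where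
  "m1 M Y X1 F = integral\<^sup>L (marginal M Y X1) F"

definition Jbar :: "'w measure \<Rightarrow> 'y measure \<Rightarrow> (nat \<Rightarrow> 'w \<Rightarrow> 'y) \<Rightarrow> (nat \<Rightarrow> 'w \<Rightarrow> 'y)
    \<Rightarrow> real \<Rightarrow> ('y \<Rightarrow> real) \<Rightarrow> real \<Rightarrow> real" where
  "Jbar M Y X0 X1 \<rho> F \<kappa> = ln \<kappa> / (m1 M Y X1 F * theta_plus M X0 \<rho> F)"

definition Gamma0 :: "'w measure \<Rightarrow> 'y measure \<Rightarrow> (nat \<Rightarrow> 'w \<Rightarrow> 'y) \<Rightarrow> (nat \<Rightarrow> 'w \<Rightarrow> 'y)
    \<Rightarrow> ('y \<Rightarrow> real ^ 'd) \<Rightarrow> real ^ 'd \<Rightarrow> real" where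
  "Gamma0 M Y X0 X1 \<psi> \<theta> = cgf M X0 (Flin \<psi> \<theta>) - m1 M Y X1 (Flin \<psi> \<theta>)"

definition Gamma :: "'w measure \<Rightarrow> 'y measure \<Rightarrow> (nat \<Rightarrow> 'w \<Rightarrow> 'y) \<Rightarrow> (nat \<Rightarrow> 'w \<Rightarrow> 'y)
    \<Rightarrow> ('y \<Rightarrow> real ^ 'd) \<Rightarrow> real ^ 'd \<Rightarrow> real ^ 'd \<Rightarrow> real" where
  "Gamma M Y X0 X1 \<psi> v \<theta> = Gamma0 M Y X0 X1 \<psi> \<theta> + (v \<bullet> \<theta>)\<^sup>2 / 2"

end

theory Submission
  imports Defs
begin

lemma exp_convex_ineq:
  fixes l u w :: real assumes "0 \<le> l" "l \<le> 1"
  shows "exp (l * u + (1 - l) * w) \<le> l * exp u + (1 - l) * exp w"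
proof -
  have "convex_on UNIV (\<lambda>x. exp (1 * x))" by (rule convex_on_exp) simp
  from convex_onD[OF this, of "1 - l" u w] assms show ?thesis by (simp add: algebra_simps)
qed

lemma int_exp_pos:
  fixes f :: "'a \<Rightarrow> real"
  assumes "prob_space M" "integrable M (\<lambda>\<omega>. exp (f \<omega>))"
  shows "0 < integral\<^sup>L M (\<lambda>\<omega>. exp (f \<omega>))"
proof -
  have ge: "0 \<le> integral\<^sup>L M (\<lambda>\<omega>. exp (f \<omega>))" by (rule integral_nonneg_AE) (simp add: less_imp_le)
  have "integral\<^sup>L M (\<lambda>\<omega>. exp (f \<omega>)) \<noteq> 0"
    using integral_nonneg_eq_0_iff_AE[OF assms(2)] prob_space.AE_False[OF assms(1)] by simp
  with ge show ?thesis by linarith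
qed

lemma cgf_zero:
  assumes "prob_space M"
  shows "cgf_exists M X (\<lambda>y. 0 * F y) \<and> cgf M X (\<lambda>y. 0 * F y) = 0"
proof -
  have s: "cgf_seq M X (\<lambda>y. 0 * F y) = (\<lambda>n. 0)"
    using assms by (simp add: cgf_seq_def prob_space.prob_space fun_eq_iff)
  show ?thesis unfolding cgf_exists_def cgf_def s
    using assms by (auto simp: convergent_const limI prob_space.finite_measure finite_measure.integrable_const)
qed

lemma cgf_seq_conv:
  assumes M: "prob_space M"
    and ia: "integrable M (\<lambda>\<omega>. exp (\<Sum>k<n. a * F (X k \<omega>)))"
    and ib: "integrable M (\<lambda>\<omega>. exp (\<Sum>k<n. b * F (X k \<omega>)))"
    and ic: "integrable M (\<lambda>\<omega>. exp (\<Sum>k<n. c * F (X k \<omega>)))"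
    and l: "0 \<le> l" "l \<le> 1" and c: "c = l * a + (1 - l) * b"
  shows "cgf_seq M X (\<lambda>y. c * F y) n \<le> l * cgf_seq M X (\<lambda>y. a * F y) n + (1 - l) * cgf_seq M X (\<lambda>y. b * F y) n"
proof -
  define S where "S \<omega> = (\<Sum>k<n. F (X k \<omega>))" for \<omega>
  have sa: "(\<Sum>k<n. t * F (X k \<omega>)) = t * S \<omega>" for t \<omega> by (simp add: S_def sum_distrib_left)
  define A where "A = integral\<^sup>L M (\<lambda>\<omega>. exp (a * S \<omega>))"
  define B where "B = integral\<^sup>L M (\<lambda>\<omega>. exp (b * S \<omega>))"
  define C where "C = integral\<^sup>L M (\<lambda>\<omega>. exp (c * S \<omega>))"
  have ia': "integrable M (\<lambda>\<omega>. exp (a * S \<omega>))" using ia by (simp add: sa)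
  have ib': "integrable M (\<lambda>\<omega>. exp (b * S \<omega>))" using ib by (simp add: sa)
  have ic': "integrable M (\<lambda>\<omega>. exp (c * S \<omega>))" using ic by (simp add: sa)
  have A: "0 < A" unfolding A_def by (rule int_exp_pos[OF M ia'])
  have B: "0 < B" unfolding B_def by (rule int_exp_pos[OF M ib'])
  have C: "0 < C" unfolding C_def by (rule int_exp_pos[OF M ic'])
  define K where "K = exp (l * ln A + (1 - l) * ln B)"
  have pw: "exp (c * S \<omega>) \<le> K * (l * (exp (a * S \<omega>) / A) + (1 - l) * (exp (b * S \<omega>) / B))" for \<omega>
  proof -
    have "exp (c * S \<omega>) = exp (l * (a * S \<omega> - ln A) + (1 - l) * (b * S \<omega> - ln B)) * K"
      unfolding K_def c by (simp add: exp_add[symmetric] algebra_simps)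
    also have "\<dots> \<le> (l * exp (a * S \<omega> - ln A) + (1 - l) * exp (b * S \<omega> - ln B)) * K"
      by (rule mult_right_mono[OF exp_convex_ineq[OF l]]) (simp add: K_def)
    also have "\<dots> = K * (l * (exp (a * S \<omega>) / A) + (1 - l) * (exp (b * S \<omega>) / B))"
      using A B by (simp add: exp_diff)
    finally show ?thesis .
  qed
  have irhs: "integrable M (\<lambda>\<omega>. K * (l * (exp (a * S \<omega>) / A) + (1 - l) * (exp (b * S \<omega>) / B)))"
    using ia' ib' by auto
  have "C \<le> integral\<^sup>L M (\<lambda>\<omega>. K * (l * (exp (a * S \<omega>) / A) + (1 - l) * (exp (b * S \<omega>) / B)))"
    unfolding C_def by (rule integral_mono[OF ic' irhs pw])
  also have "\<dots> = K * (l * (A / A) + (1 - l) * (B / B))"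
    using ia' ib' by (simp add: A_def B_def)
  also have "\<dots> = K" using A B by simp
  finally have "C \<le> K" .
  hence "ln C \<le> l * ln A + (1 - l) * ln B"
    using C unfolding K_def by (metis ln_exp ln_le_cancel_iff exp_gt_zero)
  hence "ln C / real n \<le> (l * ln A + (1 - l) * ln B) / real n"
    by (simp add: divide_right_mono)
  thus ?thesis
    by (simp add: cgf_seq_def sa A_def B_def C_def add_divide_distrib)
qed


lemma cgf_conv:
  assumes M: "prob_space M"
    and ea: "cgf_exists M X (\<lambda>y. a * F y)"
    and eb: "cgf_exists M X (\<lambda>y. b * F y)"
    and ec: "cgf_exists M X (\<lambda>y. c * F y)"
    and l: "0 \<le> l" "l \<le> 1" and c: "c = l * a + (1 - l) * b"
  shows "cgf M X (\<lambda>y. c * F y) \<le> l * cgf M X (\<lambda>y. a * F y) + (1 - l) * cgf M X (\<lambda>y. b * F y)"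
proof -
  have la: "cgf_seq M X (\<lambda>y. a * F y) \<longlonglongrightarrow> cgf M X (\<lambda>y. a * F y)"
    using ea unfolding cgf_exists_def cgf_def by (simp add: convergent_LIMSEQ_iff)
  have lb: "cgf_seq M X (\<lambda>y. b * F y) \<longlonglongrightarrow> cgf M X (\<lambda>y. b * F y)"
    using eb unfolding cgf_exists_def cgf_def by (simp add: convergent_LIMSEQ_iff)
  have lc: "cgf_seq M X (\<lambda>y. c * F y) \<longlonglongrightarrow> cgf M X (\<lambda>y. c * F y)"
    using ec unfolding cgf_exists_def cgf_def by (simp add: convergent_LIMSEQ_iff)
  have lr: "(\<lambda>n. l * cgf_seq M X (\<lambda>y. a * F y) n + (1 - l) * cgf_seq M X (\<lambda>y. b * F y) n)
      \<longlonglongrightarrow> l * cgf M X (\<lambda>y. a * F y) + (1 - l) * cgf M X (\<lambda>y. b * F y)"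
    by (intro tendsto_intros la lb)
  show ?thesis
  proof (rule LIMSEQ_le[OF lc lr], rule exI[of _ 0], intro allI impI)
    fix n :: nat
    show "cgf_seq M X (\<lambda>y. c * F y) n \<le> l * cgf_seq M X (\<lambda>y. a * F y) n + (1 - l) * cgf_seq M X (\<lambda>y. b * F y) n"
      by (rule cgf_seq_conv[OF M _ _ _ l c]) (use ea eb ec in \<open>auto simp: cgf_exists_def\<close>)
  qed
qed

lemma cgf_unique:
  assumes M: "prob_space M" and rho: "0 < \<rho>" and a: "0 < a" and b: "0 < b"
    and ea: "cgf_exists M X (\<lambda>y. a * F y)" and eb: "cgf_exists M X (\<lambda>y. b * F y)"
    and va: "cgf M X (\<lambda>y. a * F y) = \<rho>" and vb: "cgf M X (\<lambda>y. b * F y) = \<rho>"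
  shows "a = b"
proof -
  have gen: "False" if "0 < p" "p < q" "cgf_exists M X (\<lambda>y. p * F y)" "cgf_exists M X (\<lambda>y. q * F y)"
      "cgf M X (\<lambda>y. p * F y) = \<rho>" "cgf M X (\<lambda>y. q * F y) = \<rho>" for p q
  proof -
    have z: "cgf_exists M X (\<lambda>y. 0 * F y)" "cgf M X (\<lambda>y. 0 * F y) = 0" using cgf_zero[OF M] by auto
    have "cgf M X (\<lambda>y. p * F y) \<le> (1 - p / q) * cgf M X (\<lambda>y. 0 * F y) + (1 - (1 - p / q)) * cgf M X (\<lambda>y. q * F y)"
      by (rule cgf_conv[OF M z(1) that(4) that(3)]) (use that in auto)
    hence "\<rho> \<le> (p / q) * \<rho>" using that z by simp
    moreover have "(p / q) * \<rho> < \<rho>" using that rho by (simp add: field_simps)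
    ultimately show False by simp
  qed
  show ?thesis
  proof (rule ccontr)
    assume "a \<noteq> b"
    hence "a < b \<or> b < a" by auto
    thus False using gen[OF a _ ea eb va vb] gen[OF b _ eb ea vb va] by auto
  qed
qed

lemma cgf_shift:
  fixes F G :: "'y \<Rightarrow> real"
  assumes M: "prob_space M" and Xm: "\<And>k. X k \<in> measurable M Y"
    and G: "\<And>y. y \<in> space Y \<Longrightarrow> G y = F y + r"
    and e: "cgf_exists M X F"
  shows "cgf_exists M X G \<and> cgf M X G = cgf M X F + r"
proof -
  have sp: "(\<Sum>k<n. G (X k \<omega>)) = (\<Sum>k<n. F (X k \<omega>)) + real n * r" if "\<omega> \<in> space M" for n \<omega>
  proof -
    have "(\<Sum>k<n. G (X k \<omega>)) = (\<Sum>k<n. F (X k \<omega>) + r)"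
      using that by (intro sum.cong refl G measurable_space[OF Xm])
    thus ?thesis by (simp add: sum.distrib)
  qed
  have eq: "integral\<^sup>L M (\<lambda>\<omega>. exp (\<Sum>k<n. G (X k \<omega>))) = exp (real n * r) * integral\<^sup>L M (\<lambda>\<omega>. exp (\<Sum>k<n. F (X k \<omega>)))" for n
  proof -
    have "integral\<^sup>L M (\<lambda>\<omega>. exp (\<Sum>k<n. G (X k \<omega>))) = integral\<^sup>L M (\<lambda>\<omega>. exp (real n * r) * exp (\<Sum>k<n. F (X k \<omega>)))"
      by (rule Bochner_Integration.integral_cong[OF refl]) (auto simp: sp exp_add)
    thus ?thesis by simp
  qed
  have int: "integrable M (\<lambda>\<omega>. exp (\<Sum>k<n. G (X k \<omega>)))" for n
  proof -
    have i: "integrable M (\<lambda>\<omega>. exp (real n * r) * exp (\<Sum>k<n. F (X k \<omega>)))"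
      using e by (auto simp: cgf_exists_def)
    show ?thesis
      by (rule Bochner_Integration.integrable_cong[THEN iffD1, OF refl _ i]) (auto simp: sp exp_add)
  qed
  have pos: "0 < integral\<^sup>L M (\<lambda>\<omega>. exp (\<Sum>k<n. F (X k \<omega>)))" for n
    using int_exp_pos[OF M] e by (auto simp: cgf_exists_def)
  have seq: "cgf_seq M X G n = cgf_seq M X F n + r" if "n \<ge> 1" for n
    using pos[of n] that by (simp add: cgf_seq_def eq ln_mult field_simps)
  have lF: "cgf_seq M X F \<longlonglongrightarrow> cgf M X F"
    using e unfolding cgf_exists_def cgf_def by (simp add: convergent_LIMSEQ_iff)
  have "(\<lambda>n. cgf_seq M X F n + r) \<longlonglongrightarrow> cgf M X F + r" by (intro tendsto_intros lF)
  hence lG: "cgf_seq M X G \<longlonglongrightarrow> cgf M X F + r"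
    by (rule Lim_transform_eventually) (auto simp: eventually_sequentially seq intro!: exI[of _ 1])
  show ?thesis
    using lG int unfolding cgf_exists_def cgf_def by (auto simp: convergent_def limI)
qed

theorem propositiont:
  fixes M :: "'w measure" and Y :: "'y measure"
    and X0 X1 :: "nat \<Rightarrow> 'w \<Rightarrow> 'y" and \<tau> :: "'w \<Rightarrow> nat"
    and \<rho> :: real and \<psi> :: "'y \<Rightarrow> real ^ 'd" and \<Theta> :: "(real ^ 'd) set"
    and v \<theta>o :: "real ^ 'd"
  assumes M: "prob_space M"
    and X0_meas: "\<And>k. X0 k \<in> measurable M Y"
    and X1_meas: "\<And>k. X1 k \<in> measurable M Y"
    and \<tau>_meas: "\<tau> \<in> measurable M (count_space UNIV)"
    and stat0: "stationary M Y X0"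
    and stat1: "stationary M Y X1"
    \<comment> \<open>X0, X1, tau mutually independent: joint law = product of the laws\<close>
    and indep: "distr M (PiM UNIV (\<lambda>_. Y) \<Otimes>\<^sub>M (PiM UNIV (\<lambda>_. Y) \<Otimes>\<^sub>M count_space UNIV))
                   (\<lambda>\<omega>. ((\<lambda>n. X0 n \<omega>), (\<lambda>n. X1 n \<omega>), \<tau> \<omega>))
                = distr M (PiM UNIV (\<lambda>_. Y)) (\<lambda>\<omega> n. X0 n \<omega>) \<Otimes>\<^sub>M
                    (distr M (PiM UNIV (\<lambda>_. Y)) (\<lambda>\<omega> n. X1 n \<omega>) \<Otimes>\<^sub>M
                     distr M (count_space UNIV) \<tau>)"
    \<comment> \<open>(A2)\<close>
    and A2_pos: "0 < \<rho>"
    and A2: "(\<lambda>n. ln (measure M {\<omega>\<in>space M. \<tau> \<omega> \<ge> n}) / real n) \<longlonglongrightarrow> - \<rho>"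
    \<comment> \<open>(A4)\<close>
    and \<Theta>_open: "open \<Theta>"
    and A4_A3: "\<And>\<theta>. \<theta> \<in> \<Theta> \<Longrightarrow> A3 M Y X0 X1 \<rho> (Flin \<psi> \<theta>)"
    and A4_i: "\<And>i. in_classG M Y X0 X1 (\<lambda>y. \<psi> y $ i)"
    and A4_ii: "\<exists>U. open U \<and> {(t, \<theta>). \<theta> \<in> \<Theta> \<and> t \<in> {0..theta_plus M X0 \<rho> (Flin \<psi> \<theta>)}} \<subseteq> U
                 \<and> (\<forall>(t, \<theta>)\<in>U. cgf_exists M X0 (\<lambda>y. t * Flin \<psi> \<theta> y))
                 \<and> C1_on U (\<lambda>(t, \<theta>). cgf M X0 (\<lambda>y. t * Flin \<psi> \<theta> y))"
    and A4_iii: "\<And>y. y \<in> space Y \<Longrightarrow> v \<bullet> \<psi> y = 1"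
    and m1_pos: "\<And>\<theta>. \<theta> \<in> \<Theta> \<Longrightarrow> 0 < m1 M Y X1 (Flin \<psi> \<theta>)"
    \<comment> \<open>theta_o minimizes Gamma (over all theta where Lambda_0(F_theta) exists finitely)\<close>
    and min_ex: "cgf_exists M X0 (Flin \<psi> \<theta>o)"
    and min: "\<And>\<theta>. cgf_exists M X0 (Flin \<psi> \<theta>) \<Longrightarrow>
                 Gamma M Y X0 X1 \<psi> v \<theta>o \<le> Gamma M Y X0 X1 \<psi> v \<theta>"
    \<comment> \<open>theta^* = theta_o + r_o v with r_o = rho - Lambda_0(F_{theta_o})\<close>
    and star_in: "\<theta>o + (\<rho> - cgf M X0 (Flin \<psi> \<theta>o)) *\<^sub>R v \<in> \<Theta>"
  shows "\<forall>\<kappa>>1. \<forall>\<theta>\<in>\<Theta>.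
           Jbar M Y X0 X1 \<rho> (Flin \<psi> (\<theta>o + (\<rho> - cgf M X0 (Flin \<psi> \<theta>o)) *\<^sub>R v)) \<kappa>
             \<le> Jbar M Y X0 X1 \<rho> (Flin \<psi> \<theta>) \<kappa>"

proof -
  interpret P: prob_space M by (rule M)
  have Xsp: "X0 0 \<omega> \<in> space Y" if "\<omega> \<in> space M" for \<omega>
    using measurable_space[OF X0_meas] that by blast
  obtain \<omega>0 where "\<omega>0 \<in> space M" using P.not_empty by blast
  hence y0: "X0 0 \<omega>0 \<in> space Y" by (rule Xsp)
  have vne: "v \<bullet> v \<noteq> 0"
  proof
    assume "v \<bullet> v = 0" hence "v = 0" by simp
    with A4_iii[OF y0] show False by simp
  qed
  have Fsh: "Flin \<psi> (\<theta> + r *\<^sub>R v) y = Flin \<psi> \<theta> y + r" if "y \<in> space Y" for \<theta> r y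
    using A4_iii[OF that] by (simp add: Flin_def inner_add_left)
  have Fsc: "Flin \<psi> (T *\<^sub>R \<theta>) = (\<lambda>y. T * Flin \<psi> \<theta> y)" for T \<theta>
    by (simp add: Flin_def fun_eq_iff)
  have PM1: "prob_space (marginal M Y X1)"
    unfolding marginal_def by (rule P.prob_space_distr[OF X1_meas])
  have intF: "integrable (marginal M Y X1) (Flin \<psi> \<theta>)" for \<theta>
  proof -
    have "Flin \<psi> \<theta> = (\<lambda>y. \<Sum>i\<in>UNIV. \<theta> $ i * \<psi> y $ i)"
      by (simp add: Flin_def inner_vec_def fun_eq_iff)
    moreover have "integrable (marginal M Y X1) (\<lambda>y. \<Sum>i\<in>UNIV. \<theta> $ i * \<psi> y $ i)"
      using A4_i by (auto simp: in_classG_def)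
    ultimately show ?thesis by simp
  qed
  have m1sh: "m1 M Y X1 (Flin \<psi> (\<theta> + r *\<^sub>R v)) = m1 M Y X1 (Flin \<psi> \<theta>) + r" for \<theta> r
  proof -
    have "m1 M Y X1 (Flin \<psi> (\<theta> + r *\<^sub>R v)) = integral\<^sup>L (marginal M Y X1) (\<lambda>y. Flin \<psi> \<theta> y + r)"
      unfolding m1_def by (rule Bochner_Integration.integral_cong[OF refl]) (simp add: marginal_def Fsh)
    also have "\<dots> = m1 M Y X1 (Flin \<psi> \<theta>) + r"
      using intF[of \<theta>] PM1 by (simp add: m1_def prob_space.prob_space finite_measure.integrable_const prob_space.finite_measure)
    finally show ?thesis .
  qed
  have cgfsh: "cgf_exists M X0 (Flin \<psi> (\<theta> + r *\<^sub>R v)) \<and> cgf M X0 (Flin \<psi> (\<theta> + r *\<^sub>R v)) = cgf M X0 (Flin \<psi> \<theta>) + r"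
    if "cgf_exists M X0 (Flin \<psi> \<theta>)" for \<theta> r
    by (rule cgf_shift[OF M X0_meas Fsh that])
  have tp: "0 < theta_plus M X0 \<rho> (Flin \<psi> \<theta>) \<and>
      cgf_exists M X0 (\<lambda>y. theta_plus M X0 \<rho> (Flin \<psi> \<theta>) * Flin \<psi> \<theta> y) \<and>
      cgf M X0 (\<lambda>y. theta_plus M X0 \<rho> (Flin \<psi> \<theta>) * Flin \<psi> \<theta> y) = \<rho>" if "\<theta> \<in> \<Theta>" for \<theta>
  proof -
    from A4_A3[OF that] obtain t0 tq where h: "0 < t0" "t0 < tq"
        "cgf_exists M X0 (\<lambda>y. t0 * Flin \<psi> \<theta> y)" "cgf M X0 (\<lambda>y. t0 * Flin \<psi> \<theta> y) = 0"
        "cgf_exists M X0 (\<lambda>y. tq * Flin \<psi> \<theta> y)" "cgf M X0 (\<lambda>y. tq * Flin \<psi> \<theta> y) = \<rho>"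
      unfolding A3_def by blast
    have "theta_plus M X0 \<rho> (Flin \<psi> \<theta>) = tq"
      unfolding theta_plus_def
    proof (rule the_equality)
      show "0 < tq \<and> (\<exists>t0. 0 < t0 \<and> t0 < tq \<and> cgf_exists M X0 (\<lambda>y. t0 * Flin \<psi> \<theta> y) \<and> cgf M X0 (\<lambda>y. t0 * Flin \<psi> \<theta> y) = 0) \<and>
          cgf_exists M X0 (\<lambda>y. tq * Flin \<psi> \<theta> y) \<and> cgf M X0 (\<lambda>y. tq * Flin \<psi> \<theta> y) = \<rho>"
        using h by auto
    next
      fix x assume "0 < x \<and> (\<exists>t0. 0 < t0 \<and> t0 < x \<and> cgf_exists M X0 (\<lambda>y. t0 * Flin \<psi> \<theta> y) \<and> cgf M X0 (\<lambda>y. t0 * Flin \<psi> \<theta> y) = 0) \<and>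
          cgf_exists M X0 (\<lambda>y. x * Flin \<psi> \<theta> y) \<and> cgf M X0 (\<lambda>y. x * Flin \<psi> \<theta> y) = \<rho>"
      thus "x = tq" using cgf_unique[OF M A2_pos _ _ _ h(5) _ h(6)] h by auto
    qed
    thus ?thesis using h by auto
  qed
  define ro where "ro = \<rho> - cgf M X0 (Flin \<psi> \<theta>o)"
  define \<theta>s where "\<theta>s = \<theta>o + ro *\<^sub>R v"
  have s_in: "\<theta>s \<in> \<Theta>" using star_in by (simp add: \<theta>s_def ro_def)
  have es: "cgf_exists M X0 (Flin \<psi> \<theta>s)" "cgf M X0 (Flin \<psi> \<theta>s) = \<rho>"
    using cgfsh[OF min_ex, of ro] by (auto simp: \<theta>s_def ro_def)
  have one: "(\<lambda>y. 1 * Flin \<psi> \<theta>s y) = Flin \<psi> \<theta>s" by simp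
  have Ts: "theta_plus M X0 \<rho> (Flin \<psi> \<theta>s) = 1"
    using tp[OF s_in] cgf_unique[OF M A2_pos, of "theta_plus M X0 \<rho> (Flin \<psi> \<theta>s)" 1 X0 "Flin \<psi> \<theta>s"] es
    by (simp add: one)
  have m1s: "m1 M Y X1 (Flin \<psi> \<theta>s) = \<rho> - Gamma0 M Y X0 X1 \<psi> \<theta>o"
    by (simp add: \<theta>s_def m1sh ro_def Gamma0_def)
  show ?thesis
  proof (intro allI impI ballI)
    fix \<kappa> :: real and \<theta> assume k: "1 < \<kappa>" and th: "\<theta> \<in> \<Theta>"
    define T where "T = theta_plus M X0 \<rho> (Flin \<psi> \<theta>)"
    define th2 where "th2 = T *\<^sub>R \<theta>"
    have T: "0 < T" "cgf_exists M X0 (Flin \<psi> th2)" "cgf M X0 (Flin \<psi> th2) = \<rho>"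
      using tp[OF th] by (auto simp: th2_def Fsc T_def)
    have m1v: "m1 M Y X1 (Flin \<psi> th2) = T * m1 M Y X1 (Flin \<psi> \<theta>)"
      by (simp add: th2_def Fsc m1_def)
    have m1vpos: "0 < m1 M Y X1 (Flin \<psi> th2)" using m1v T m1_pos[OF th] by simp
    define s where "s = (v \<bullet> th2) / (v \<bullet> v)"
    define \<eta> where "\<eta> = th2 + (- s) *\<^sub>R v"
    have ve: "v \<bullet> \<eta> = 0" using vne by (simp add: \<eta>_def s_def inner_add_right inner_diff_right)
    have ee: "cgf_exists M X0 (Flin \<psi> \<eta>)" "cgf M X0 (Flin \<psi> \<eta>) = \<rho> - s"
      using cgfsh[OF T(2), of "- s"] T(3) by (auto simp: \<eta>_def)
    have "Gamma M Y X0 X1 \<psi> v \<eta> = \<rho> - m1 M Y X1 (Flin \<psi> th2)"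
      using ee ve m1sh[of th2 "- s"] unfolding \<eta>_def[symmetric] by (simp add: Gamma_def Gamma0_def)
    moreover have "Gamma M Y X0 X1 \<psi> v \<theta>o \<le> Gamma M Y X0 X1 \<psi> v \<eta>" by (rule min[OF ee(1)])
    moreover have "Gamma0 M Y X0 X1 \<psi> \<theta>o \<le> Gamma M Y X0 X1 \<psi> v \<theta>o" by (simp add: Gamma_def)
    ultimately have le: "m1 M Y X1 (Flin \<psi> th2) \<le> m1 M Y X1 (Flin \<psi> \<theta>s)" using m1s by linarith
    have lk: "0 \<le> ln \<kappa>" using k by simp
    have "Jbar M Y X0 X1 \<rho> (Flin \<psi> \<theta>s) \<kappa> = ln \<kappa> / m1 M Y X1 (Flin \<psi> \<theta>s)"
      by (simp add: Jbar_def Ts)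
    also have "\<dots> \<le> ln \<kappa> / m1 M Y X1 (Flin \<psi> th2)"
      using le m1vpos lk by (intro divide_left_mono) auto
    also have "\<dots> = Jbar M Y X0 X1 \<rho> (Flin \<psi> \<theta>) \<kappa>"
      by (simp add: Jbar_def m1v T_def mult.commute)
    finally show "Jbar M Y X0 X1 \<rho> (Flin \<psi> (\<theta>o + (\<rho> - cgf M X0 (Flin \<psi> \<theta>o)) *\<^sub>R v)) \<kappa> \<le> Jbar M Y X0 X1 \<rho> (Flin \<psi> \<theta>) \<kappa>"
      by (simp add: \<theta>s_def ro_def)
  qed
qed

end
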